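(* Let $n \ge 3$. The commutator subgroup $TW_n'$ has the following presentation. Generators: $\beta(S;j)$ for every $j \in \{1,\dots,n-2\}$ and every (possibly empty) subset $S \subseteq \{1,\dots,j-1\}$. Defining relations: for every $t \in \{1,\dots,n-2\}$, every $j$ with $1 \le j \le t-2$, and every subset $S \subseteq \{1,\dots,t-1\}$: (i) if $j \in S$ and $j+1 \notin S$, then $\beta(S;t) = \beta(S\setminus\{j\};t)$; (ii) if $j \in S$ and $j+1 \in S$, then, writing $S_{<j} = \{i \in S : i < j\}$, $$\beta(S;t) = \beta(S_{<j};j)^{-1}\,\beta(S\setminus\{j\};t)\,\beta(S_{<j};j).$$ Here the generator $\beta(S;j)$ corresponds to the element of $TW_n$ defined in the context.
   Context: For $n \ge 2$, the twin group $TW_n$ is the group with generators $\tau_1,\dots,\tau_{n-1}$ and defining relations $\tau_i^2=1$ for all $i$, and $\tau_i\tau_j=\tau_j\tau_i$ whenever $|i-j|>1$. $G'$ denotes the commutator subgroup of a group $G$. For $1 \le j \le n-2$ and a subset $S=\{i_1<i_2<\dots<i_s\} \subseteq \{1,\dots,j-1\}$ (possibly empty), define $$\beta(S;j) := \tau_{i_1}\tau_{i_2}\cdots\tau_{i_s}\,(\tau_{j+1}\tau_j\tau_{j+1}\tau_j)\,\tau_{i_s}\cdots\tau_{i_2}\tau_{i_1}\in TW_n,$$ so that $\beta(\emptyset;j)=\tau_{j+1}\tau_j\tau_{j+1}\tau_j$. *)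

theory Defs
  imports "HOL-Algebra.Algebra"
begin

text \<open>The twin group TW_n, constructed concretely as words over the letters
  1..n-1 (letter i stands for tau_i) modulo the congruence generated by the
  defining relations tau_i tau_i = 1 and tau_i tau_j = tau_j tau_i for |i-j|>1.\<close>

definition tw_letters :: "nat \<Rightarrow> nat list set" where
  "tw_letters n = {w. set w \<subseteq> {1..<n}}"

inductive tw_eq :: "nat \<Rightarrow> nat list \<Rightarrow> nat list \<Rightarrow> bool" for n where
  tw_refl: "w \<in> tw_letters n \<Longrightarrow> tw_eq n w w"
| tw_sym: "tw_eq n u w \<Longrightarrow> tw_eq n w u"
| tw_trans: "tw_eq n u v \<Longrightarrow> tw_eq n v w \<Longrightarrow> tw_eq n u w"
| tw_square: "xs \<in> tw_letters n \<Longrightarrow> ys \<in> tw_letters n \<Longrightarrow> i \<in> {1..<n} \<Longrightarrow>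
     tw_eq n (xs @ [i, i] @ ys) (xs @ ys)"
| tw_comm: "xs \<in> tw_letters n \<Longrightarrow> ys \<in> tw_letters n \<Longrightarrow> i \<in> {1..<n} \<Longrightarrow> j \<in> {1..<n} \<Longrightarrow>
     (i + 1 < j \<or> j + 1 < i) \<Longrightarrow> tw_eq n (xs @ [i, j] @ ys) (xs @ [j, i] @ ys)"

definition tw_class :: "nat \<Rightarrow> nat list \<Rightarrow> nat list set" where
  "tw_class n w = {v. tw_eq n v w}"

definition TW :: "nat \<Rightarrow> nat list set monoid" where
  "TW n = \<lparr> carrier = tw_class n ` tw_letters n,
            monoid.mult = (\<lambda>A B. {v. \<exists>x\<in>A. \<exists>y\<in>B. tw_eq n v (x @ y)}),
            one = tw_class n [] \<rparr>"

definition tau :: "nat \<Rightarrow> nat \<Rightarrow> nat list set" where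
  "tau n i = tw_class n [i]"

definition beta :: "nat \<Rightarrow> nat set \<Rightarrow> nat \<Rightarrow> nat list set" where
  "beta n S j = tw_class n (sorted_list_of_set S @ [j+1, j, j+1, j] @ rev (sorted_list_of_set S))"

definition beta_index :: "nat \<Rightarrow> (nat set \<times> nat) set" where
  "beta_index n = {(S, j). j \<in> {1..n-2} \<and> S \<subseteq> {1..<j}}"

definition beta_relations :: "nat \<Rightarrow> ('h, 'c) monoid_scheme \<Rightarrow> (nat set \<times> nat \<Rightarrow> 'h) \<Rightarrow> bool" where
  "beta_relations n H f \<longleftrightarrow>
    (\<forall>t \<in> {1..n-2}. \<forall>j. 1 \<le> j \<and> j + 2 \<le> t \<longrightarrow> (\<forall>S. S \<subseteq> {1..<t} \<longrightarrow>
       (j \<in> S \<and> j + 1 \<notin> S \<longrightarrow> f (S, t) = f (S - {j}, t)) \<and>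
       (j \<in> S \<and> j + 1 \<in> S \<longrightarrow>
          f (S, t) = inv\<^bsub>H\<^esub> (f ({i \<in> S. i < j}, j)) \<otimes>\<^bsub>H\<^esub> f (S - {j}, t)
                     \<otimes>\<^bsub>H\<^esub> f ({i \<in> S. i < j}, j))))"

end

theory Submission
  imports Defs
begin



lemma letters_simps[simp]:
  "[] \<in> tw_letters n"
  "(xs @ ys \<in> tw_letters n) = (xs \<in> tw_letters n \<and> ys \<in> tw_letters n)"
  "(x # xs \<in> tw_letters n) = (x \<in> {1..<n} \<and> xs \<in> tw_letters n)"
  "(rev xs \<in> tw_letters n) = (xs \<in> tw_letters n)"
  by (auto simp: tw_letters_def)

lemma tw_eq_letters: "tw_eq n u v \<Longrightarrow> u \<in> tw_letters n \<and> v \<in> tw_letters n"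
  by (induction rule: tw_eq.induct) auto

lemma tw_eq_app_right: "tw_eq n u v \<Longrightarrow> w \<in> tw_letters n \<Longrightarrow> tw_eq n (u @ w) (v @ w)"
proof (induction rule: tw_eq.induct)
  case (tw_refl x) then show ?case by (simp add: tw_eq.tw_refl)
next
  case (tw_sym u w) then show ?case by (simp add: tw_eq.tw_sym)
next
  case (tw_trans u v w) then show ?case by (meson tw_eq.tw_trans)
next
  case (tw_square xs ys i) then show ?case using tw_eq.tw_square[of xs n "ys @ w" i] by simp
next
  case (tw_comm xs ys i j) then show ?case using tw_eq.tw_comm[of xs n "ys @ w" i j] by simp
qed

lemma tw_eq_app_left: "tw_eq n u v \<Longrightarrow> w \<in> tw_letters n \<Longrightarrow> tw_eq n (w @ u) (w @ v)"
proof (induction rule: tw_eq.induct)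
  case (tw_refl x) then show ?case by (simp add: tw_eq.tw_refl)
next
  case (tw_sym u w) then show ?case by (simp add: tw_eq.tw_sym)
next
  case (tw_trans u v w) then show ?case by (meson tw_eq.tw_trans)
next
  case (tw_square xs ys i) then show ?case using tw_eq.tw_square[of "w @ xs" n ys i] by simp
next
  case (tw_comm xs ys i j) then show ?case using tw_eq.tw_comm[of "w @ xs" n ys i j] by simp
qed

lemma tw_eq_app: "tw_eq n u u' \<Longrightarrow> tw_eq n v v' \<Longrightarrow> tw_eq n (u @ v) (u' @ v')"
  by (meson tw_eq.tw_trans tw_eq_app_left tw_eq_app_right tw_eq_letters)

lemma tw_eq_ctx: "tw_eq n u v \<Longrightarrow> xs \<in> tw_letters n \<Longrightarrow> ys \<in> tw_letters n \<Longrightarrow>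
   tw_eq n (xs @ u @ ys) (xs @ v @ ys)"
  by (meson tw_eq.tw_refl tw_eq_app)

lemmas tw_trans_rule[trans] = tw_eq.tw_trans

lemma tw_cancel: "w \<in> tw_letters n \<Longrightarrow> tw_eq n (w @ rev w) []"
proof (induction w)
  case Nil then show ?case by (simp add: tw_eq.tw_refl)
next
  case (Cons x w)
  have "tw_eq n ([x] @ (w @ rev w) @ [x]) ([x] @ [] @ [x])"
    using Cons by (intro tw_eq_ctx) auto
  also have "tw_eq n ([x] @ [] @ [x]) []" using tw_eq.tw_square[of "[]" n "[]" x] Cons by simp
  finally show ?case by simp
qed

lemma tw_cancel': "w \<in> tw_letters n \<Longrightarrow> tw_eq n (rev w @ w) []"
  using tw_cancel[of "rev w" n] by simp

lemma tw_sq: "i \<in> {1..<n} \<Longrightarrow> tw_eq n [i, i] []"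
  using tw_eq.tw_square[of "[]" n "[]" i] by simp

lemma tw_comm_word: "i \<in> {1..<n} \<Longrightarrow> w \<in> tw_letters n \<Longrightarrow> (\<forall>x\<in>set w. i + 1 < x \<or> x + 1 < i)
   \<Longrightarrow> tw_eq n (w @ [i]) (i # w)"
proof (induction w)
  case Nil then show ?case by (simp add: tw_eq.tw_refl)
next
  case (Cons x w)
  have "tw_eq n ([x] @ (w @ [i]) @ []) ([x] @ (i # w) @ [])"
    using Cons by (intro tw_eq_ctx) auto
  also have "tw_eq n ([x] @ (i # w) @ []) ([] @ [x, i] @ w)" using Cons by (simp add: tw_eq.tw_refl)
  also have "tw_eq n ([] @ [x, i] @ w) ([] @ [i, x] @ w)"
    using Cons by (intro tw_eq.tw_comm) auto
  finally show ?case by simp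
qed

abbreviation cls where "cls n \<equiv> tw_class n"

lemma cls_mem: "u \<in> tw_letters n \<Longrightarrow> u \<in> cls n u"
  by (simp add: tw_class_def tw_eq.tw_refl)

lemma cls_eq: assumes a: "u \<in> tw_letters n" "v \<in> tw_letters n"
  shows "(cls n u = cls n v) = tw_eq n u v"
proof
  assume b: "cls n u = cls n v"
  have "u \<in> cls n u" using a by (simp add: tw_class_def tw_eq.tw_refl)
  then have "u \<in> cls n v" using b by simp
  then show "tw_eq n u v" by (simp add: tw_class_def)
next
  assume "tw_eq n u v"
  then show "cls n u = cls n v" unfolding tw_class_def by (meson tw_eq.tw_trans tw_eq.tw_sym)
qed

lemma carrier_TW: "carrier (TW n) = cls n ` tw_letters n"
  by (simp add: TW_def)

lemma one_TW: "\<one>\<^bsub>TW n\<^esub> = cls n []"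
  by (simp add: TW_def)

lemma mult_TW: "u \<in> tw_letters n \<Longrightarrow> v \<in> tw_letters n \<Longrightarrow> cls n u \<otimes>\<^bsub>TW n\<^esub> cls n v = cls n (u @ v)"
  unfolding TW_def tw_class_def
  apply (auto intro: tw_eq.tw_refl)
  by (meson tw_eq.tw_trans tw_eq_app)

lemma group_TW: "group (TW n)"
proof (rule groupI)
  fix x y assume "x \<in> carrier (TW n)" "y \<in> carrier (TW n)"
  then show "x \<otimes>\<^bsub>TW n\<^esub> y \<in> carrier (TW n)" by (auto simp: carrier_TW mult_TW)
next
  show "\<one>\<^bsub>TW n\<^esub> \<in> carrier (TW n)" by (simp add: carrier_TW one_TW)
next
  fix x y z assume "x \<in> carrier (TW n)" "y \<in> carrier (TW n)" "z \<in> carrier (TW n)"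
  then show "x \<otimes>\<^bsub>TW n\<^esub> y \<otimes>\<^bsub>TW n\<^esub> z = x \<otimes>\<^bsub>TW n\<^esub> (y \<otimes>\<^bsub>TW n\<^esub> z)"
    by (auto simp: carrier_TW mult_TW)
next
  fix x assume "x \<in> carrier (TW n)"
  then show "\<one>\<^bsub>TW n\<^esub> \<otimes>\<^bsub>TW n\<^esub> x = x" by (auto simp: carrier_TW mult_TW one_TW)
next
  fix x assume "x \<in> carrier (TW n)"
  then obtain u where u: "u \<in> tw_letters n" "x = cls n u" by (auto simp: carrier_TW)
  then have "cls n (rev u) \<otimes>\<^bsub>TW n\<^esub> x = \<one>\<^bsub>TW n\<^esub>"
    by (simp add: mult_TW one_TW cls_eq tw_cancel')
  moreover have "cls n (rev u) \<in> carrier (TW n)" using u by (simp add: carrier_TW)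
  ultimately show "\<exists>y\<in>carrier (TW n). y \<otimes>\<^bsub>TW n\<^esub> x = \<one>\<^bsub>TW n\<^esub>" by blast
qed

lemma cls_carrier: "u \<in> tw_letters n \<Longrightarrow> cls n u \<in> carrier (TW n)"
  by (simp add: carrier_TW)

lemma inv_TW: "u \<in> tw_letters n \<Longrightarrow> inv\<^bsub>TW n\<^esub> (cls n u) = cls n (rev u)"
  by (rule group.inv_equality[OF group_TW]) (simp_all add: mult_TW one_TW cls_eq tw_cancel' carrier_TW)




definition tog :: "nat set \<Rightarrow> nat \<Rightarrow> nat set" where
  "tog s i = (if i \<in> s then s - {i} else insert i s)"

definition gam :: "('h, 'c) monoid_scheme \<Rightarrow> (nat set \<times> nat \<Rightarrow> 'h) \<Rightarrow> nat set \<Rightarrow> nat \<Rightarrow> 'h" where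
  "gam H f s i = (if i + 1 \<in> s then (if i \<in> s then inv\<^bsub>H\<^esub> (f ({x \<in> s. x < i}, i)) else f ({x \<in> s. x < i}, i))
                 else \<one>\<^bsub>H\<^esub>)"

fun twact :: "('h, 'c) monoid_scheme \<Rightarrow> (nat set \<times> nat \<Rightarrow> 'h) \<Rightarrow> 'h \<times> nat set \<Rightarrow> nat list \<Rightarrow> 'h \<times> nat set" where
  "twact H f p [] = p"
| "twact H f p (i # w) = twact H f (fst p \<otimes>\<^bsub>H\<^esub> gam H f (snd p) i, tog (snd p) i) w"

lemma twact_append: "twact H f p (u @ v) = twact H f (twact H f p u) v"
  by (induction u arbitrary: p) auto

lemma snd_twact: "snd (twact H f p w) = foldl tog (snd p) w"
  by (induction w arbitrary: p) auto

lemma tog_tog[simp]: "tog (tog s i) i = s"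
  by (auto simp: tog_def)

lemma tog_comm: "tog (tog s i) j = tog (tog s j) i"
  by (auto simp: tog_def)

lemma tog_range: "s \<subseteq> {1..<n} \<Longrightarrow> i \<in> {1..<n} \<Longrightarrow> tog s i \<subseteq> {1..<n}"
  by (auto simp: tog_def)

lemma foldl_tog_range: "s \<subseteq> {1..<n} \<Longrightarrow> w \<in> tw_letters n \<Longrightarrow> foldl tog s w \<subseteq> {1..<n}"
proof (induction w arbitrary: s)
  case (Cons a w)
  then have "tog s a \<subseteq> {1..<n}" by (intro tog_range) auto
  with Cons show ?case by simp
qed simp

lemma foldl_tog_tw_eq: "tw_eq n u v \<Longrightarrow> foldl tog s u = foldl tog s v"
proof (induction arbitrary: s rule: tw_eq.induct)
  case (tw_comm xs ys i j) then show ?case by (simp add: tog_comm)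
qed auto

definition sd :: "nat set \<Rightarrow> nat set \<Rightarrow> nat set" where
  "sd A B = (A - B) \<union> (B - A)"

lemma sd_assoc: "sd (sd A B) C = sd A (sd B C)"
  unfolding sd_def by blast

lemma sd_comm: "sd A B = sd B A"
  unfolding sd_def by blast

lemma sd_empty[simp]: "sd A {} = A" "sd {} A = A" "sd A A = {}"
  unfolding sd_def by blast+

lemma tog_sd: "tog s x = sd s {x}"
  unfolding sd_def tog_def by auto

lemma foldl_tog_sd: "foldl tog s u = sd s (foldl tog {} u)"
proof (induction u arbitrary: s)
  case Nil then show ?case by simp
next
  case (Cons x u)
  have "foldl tog s (x # u) = sd (sd s {x}) (foldl tog {} u)" using Cons.IH[of "tog s x"] by (simp add: tog_sd[of s x])
  moreover have "foldl tog {} (x # u) = sd {x} (foldl tog {} u)" using Cons.IH[of "{x}"] by (simp add: tog_sd[of "{}" x])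
  ultimately show ?case by (simp add: sd_assoc)
qed

lemma foldl_tog_rev: "foldl tog {} (rev u) = foldl tog {} u"
proof (induction u)
  case (Cons x u)
  have "foldl tog {} (rev (x # u)) = sd (foldl tog {} u) {x}" using Cons.IH by (simp add: tog_sd[of _ x])
  also have "\<dots> = foldl tog {} (x # u)"
    using foldl_tog_sd[of "{x}" u] by (simp add: tog_sd[of "{}" x] sd_comm)
  finally show ?case .
qed simp

lemma foldl_tog_app: "foldl tog {} (u @ v) = sd (foldl tog {} u) (foldl tog {} v)"
  using foldl_tog_sd[of "foldl tog {} u" v] by simp

lemma (in group) gl1: "c \<in> carrier G \<Longrightarrow> a \<in> carrier G \<Longrightarrow> a' \<in> carrier G \<Longrightarrow> c \<otimes> a' = a \<otimes> c \<Longrightarrow>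
   c \<otimes> inv a' = inv a \<otimes> c"
  by (metis inv_solve_left inv_solve_right m_assoc m_closed inv_closed)

lemma (in group) gl2: "a \<in> carrier G \<Longrightarrow> b \<in> carrier G \<Longrightarrow> b \<otimes> (inv b \<otimes> a \<otimes> b) = a \<otimes> b"
  by (simp add: m_assoc[symmetric])

lemma (in group) gl3: "a \<in> carrier G \<Longrightarrow> b \<in> carrier G \<Longrightarrow> inv b \<otimes> a = (inv b \<otimes> a \<otimes> b) \<otimes> inv b"
  by (simp add: m_assoc)

locale twrel = group H for H (structure) +
  fixes n :: nat and f :: "nat set \<times> nat \<Rightarrow> 'a"
  assumes fclosed: "f ` beta_index n \<subseteq> carrier H"
    and rels: "beta_relations n H f"
begin

lemma f_closed: "j \<in> {1..n-2} \<Longrightarrow> S \<subseteq> {1..<j} \<Longrightarrow> f (S, j) \<in> carrier H"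
  using fclosed by (auto simp: beta_index_def)

lemma rel1: "t \<in> {1..n-2} \<Longrightarrow> 1 \<le> j \<Longrightarrow> j + 2 \<le> t \<Longrightarrow> S \<subseteq> {1..<t} \<Longrightarrow> j \<in> S \<Longrightarrow> j + 1 \<notin> S \<Longrightarrow>
   f (S, t) = f (S - {j}, t)"
  using rels unfolding beta_relations_def by blast

lemma rel2: "t \<in> {1..n-2} \<Longrightarrow> 1 \<le> j \<Longrightarrow> j + 2 \<le> t \<Longrightarrow> S \<subseteq> {1..<t} \<Longrightarrow> j \<in> S \<Longrightarrow> j + 1 \<in> S \<Longrightarrow>
   f (S, t) = inv (f ({i \<in> S. i < j}, j)) \<otimes> f (S - {j}, t) \<otimes> f ({i \<in> S. i < j}, j)"
  using rels unfolding beta_relations_def by blast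

lemma gam_closed: "s \<subseteq> {1..<n} \<Longrightarrow> i \<in> {1..<n} \<Longrightarrow> gam H f s i \<in> carrier H"
  unfolding gam_def by (auto intro!: f_closed inv_closed)

lemma gam_sq: "s \<subseteq> {1..<n} \<Longrightarrow> i \<in> {1..<n} \<Longrightarrow> gam H f s i \<otimes> gam H f (tog s i) i = \<one>"
proof -
  assume a: "s \<subseteq> {1..<n}" "i \<in> {1..<n}"
  have e: "{x \<in> tog s i. x < i} = {x \<in> s. x < i}" by (auto simp: tog_def)
  show ?thesis
  proof (cases "i + 1 \<in> s")
    case True
    then have fc: "f ({x \<in> s. x < i}, i) \<in> carrier H" using a by (intro f_closed) auto
    show ?thesis using True fc unfolding gam_def e by (auto simp: tog_def)
  next
    case False
    then show ?thesis unfolding gam_def by (auto simp: tog_def)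
  qed
qed

lemma gam_far: "j \<noteq> i \<Longrightarrow> j \<noteq> i + 1 \<Longrightarrow> i < j \<Longrightarrow> gam H f (tog s j) i = gam H f s i"
proof -
  assume a: "j \<noteq> i" "j \<noteq> i + 1" "i < j"
  have "{x \<in> tog s j. x < i} = {x \<in> s. x < i}" using a by (auto simp: tog_def)
  moreover have "(i \<in> tog s j) = (i \<in> s)" "(i + 1 \<in> tog s j) = (i + 1 \<in> s)" using a by (auto simp: tog_def)
  ultimately show ?thesis unfolding gam_def by simp
qed

lemma gam_comm_main:
  assumes s: "s \<subseteq> {1..<n}" and ij: "1 \<le> i" "i + 1 < j" "j < n"
  shows "gam H f s i \<otimes> gam H f (tog s i) j = gam H f s j \<otimes> gam H f s i"
proof -
  have gi: "gam H f s i \<in> carrier H" using s ij by (intro gam_closed) auto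
  show ?thesis
  proof (cases "j + 1 \<in> s")
    case False
    then have "j + 1 \<notin> tog s i" using ij by (auto simp: tog_def)
    then show ?thesis using False gi unfolding gam_def[of H f _ j] by simp
  next
    case True
    have jr: "j \<in> {1..n-2}" using True s ij by auto
    define A where "A = {x \<in> s. x < j}"
    define A' where "A' = {x \<in> tog s i. x < j}"
    have Ar: "A \<subseteq> {1..<j}" "A' \<subseteq> {1..<j}" using s ij by (auto simp: A_def A'_def tog_def)
    have ac: "f (A, j) \<in> carrier H" "f (A', j) \<in> carrier H" using Ar jr by (auto intro!: f_closed)
    have j1: "j + 1 \<in> tog s i" using True ij by (auto simp: tog_def)
    have jj: "(j \<in> tog s i) = (j \<in> s)" using ij by (auto simp: tog_def)
    have key: "gam H f s i \<otimes> f (A', j) = f (A, j) \<otimes> gam H f s i"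
    proof (cases "i + 1 \<in> s")
      case False
      then have g1: "gam H f s i = \<one>" by (simp add: gam_def)
      have "f (A', j) = f (A, j)"
      proof (cases "i \<in> s")
        case True
        then have "A' = A - {i}" using ij by (auto simp: A_def A'_def tog_def)
        moreover have "f (A, j) = f (A - {i}, j)"
          using True False ij jr Ar by (intro rel1) (auto simp: A_def)
        ultimately show ?thesis by simp
      next
        case False': False
        then have "A' = insert i A" using ij by (auto simp: A_def A'_def tog_def)
        moreover have "f (A', j) = f (A' - {i}, j)"
          using False' False ij jr Ar \<open>A' = insert i A\<close> by (intro rel1) (auto simp: A_def)
        moreover have "A' - {i} = A" using False' \<open>A' = insert i A\<close> by (auto simp: A_def)
        ultimately show ?thesis by simp
      qed
      then show ?thesis using g1 ac by simp
    next
      case True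
      define B where "B = {x \<in> s. x < i}"
      have bc: "f (B, i) \<in> carrier H" using s ij by (intro f_closed) (auto simp: B_def)
      show ?thesis
      proof (cases "i \<in> s")
        case False
        then have g: "gam H f s i = f (B, i)" using True by (simp add: gam_def B_def)
        have A': "A' = insert i A" using False ij by (auto simp: A_def A'_def tog_def)
        have "f (A', j) = inv (f ({x \<in> A'. x < i}, i)) \<otimes> f (A' - {i}, j) \<otimes> f ({x \<in> A'. x < i}, i)"
          using True ij jr Ar A' by (intro rel2) (auto simp: A_def)
        moreover have "{x \<in> A'. x < i} = B" "A' - {i} = A" using A' False ij by (auto simp: A_def B_def)
        ultimately have "f (A', j) = inv (f (B, i)) \<otimes> f (A, j) \<otimes> f (B, i)" by simp
        then show ?thesis using g gl2 bc ac by simp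
      next
        case True': True
        then have g: "gam H f s i = inv (f (B, i))" using True by (simp add: gam_def B_def)
        have A': "A' = A - {i}" using True' ij by (auto simp: A_def A'_def tog_def)
        have "f (A, j) = inv (f ({x \<in> A. x < i}, i)) \<otimes> f (A - {i}, j) \<otimes> f ({x \<in> A. x < i}, i)"
          using True True' ij jr Ar by (intro rel2) (auto simp: A_def)
        moreover have "{x \<in> A. x < i} = B" using ij by (auto simp: A_def B_def)
        ultimately have "f (A, j) = inv (f (B, i)) \<otimes> f (A', j) \<otimes> f (B, i)" using A' by simp
        then show ?thesis using g gl3 bc ac by simp
      qed
    qed
    show ?thesis
    proof (cases "j \<in> s")
      case False
      then show ?thesis using True j1 jj key unfolding gam_def[of H f _ j] A_def A'_def by simp
    next
      case True': True
      have "gam H f s i \<otimes> inv (f (A', j)) = inv (f (A, j)) \<otimes> gam H f s i"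
        using gl1[OF gi ac(1) ac(2) key] .
      then show ?thesis using True True' j1 jj unfolding gam_def[of H f _ j] A_def A'_def by simp
    qed
  qed
qed

lemma gam_comm:
  assumes s: "s \<subseteq> {1..<n}" and ij: "i \<in> {1..<n}" "j \<in> {1..<n}" "i + 1 < j \<or> j + 1 < i"
  shows "gam H f s i \<otimes> gam H f (tog s i) j = gam H f s j \<otimes> gam H f (tog s j) i"
  using ij
proof (elim disjE)
  assume "i + 1 < j"
  then show ?thesis using gam_comm_main[OF s, of i j] gam_far[of j i s] ij by auto
next
  assume "j + 1 < i"
  then show ?thesis using gam_comm_main[OF s, of j i] gam_far[of i j s] ij by auto
qed

lemma twact_closed: "g \<in> carrier H \<Longrightarrow> s \<subseteq> {1..<n} \<Longrightarrow> w \<in> tw_letters n \<Longrightarrow>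
   fst (twact H f (g, s) w) \<in> carrier H"
proof (induction w arbitrary: g s)
  case (Cons a w)
  have "g \<otimes> gam H f s a \<in> carrier H" using Cons by (simp add: gam_closed)
  moreover have "tog s a \<subseteq> {1..<n}" using Cons by (intro tog_range) auto
  ultimately show ?case using Cons by simp
qed simp

lemma twact_mult: "g \<in> carrier H \<Longrightarrow> g' \<in> carrier H \<Longrightarrow> s \<subseteq> {1..<n} \<Longrightarrow> w \<in> tw_letters n \<Longrightarrow>
   twact H f (g \<otimes> g', s) w = (g \<otimes> fst (twact H f (g', s) w), snd (twact H f (g', s) w))"
proof (induction w arbitrary: g' s)
  case (Cons i w)
  have "twact H f (g \<otimes> g', s) (i # w) = twact H f (g \<otimes> (g' \<otimes> gam H f s i), tog s i) w"
    using Cons by (simp add: m_assoc gam_closed)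
  also have "\<dots> = (g \<otimes> fst (twact H f (g' \<otimes> gam H f s i, tog s i) w), snd (twact H f (g' \<otimes> gam H f s i, tog s i) w))"
    using Cons tog_range[of s n i] by (intro Cons.IH) (auto simp: gam_closed)
  finally show ?case by simp
qed simp

lemma twact_tw_eq: "tw_eq n u v \<Longrightarrow> g \<in> carrier H \<Longrightarrow> s \<subseteq> {1..<n} \<Longrightarrow>
   twact H f (g, s) u = twact H f (g, s) v"
proof (induction arbitrary: g s rule: tw_eq.induct)
  case (tw_square xs ys i)
  obtain g' s' where p: "twact H f (g, s) xs = (g', s')" by fastforce
  have g': "g' \<in> carrier H" using twact_closed[of g s xs] tw_square p by simp
  have s': "s' \<subseteq> {1..<n}" using snd_twact[of H f "(g,s)" xs] foldl_tog_range[of s n xs] tw_square p by simp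
  have gc: "gam H f s' i \<in> carrier H" "gam H f (tog s' i) i \<in> carrier H"
    using s' tw_square tog_range[of s' n i] by (auto intro!: gam_closed)
  have "g' \<otimes> gam H f s' i \<otimes> gam H f (tog s' i) i = g'"
    using gam_sq[OF s'] tw_square g' gc by (simp add: m_assoc)
  then show ?case using p by (simp add: twact_append)
next
  case (tw_comm xs ys i j)
  obtain g' s' where p: "twact H f (g, s) xs = (g', s')" by fastforce
  have g': "g' \<in> carrier H" using twact_closed[of g s xs] tw_comm p by simp
  have s': "s' \<subseteq> {1..<n}" using snd_twact[of H f "(g,s)" xs] foldl_tog_range[of s n xs] tw_comm p by simp
  have gc: "gam H f s' i \<in> carrier H" "gam H f (tog s' i) j \<in> carrier H"
     "gam H f s' j \<in> carrier H" "gam H f (tog s' j) i \<in> carrier H"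
    using s' tw_comm tog_range[of s' n i] tog_range[of s' n j] by (auto intro!: gam_closed)
  have "g' \<otimes> gam H f s' i \<otimes> gam H f (tog s' i) j = g' \<otimes> gam H f s' j \<otimes> gam H f (tog s' j) i"
    using gam_comm[OF s', of i j] tw_comm g' gc by (simp add: m_assoc)
  then show ?case using p by (simp add: twact_append tog_comm)
qed auto

end




definition Zset :: "nat \<Rightarrow> nat list set set" where
  "Zset n = Collect (\<lambda>U. \<exists>u \<in> tw_letters n. U = cls n u \<and> foldl tog {} u = {})"

lemma Zset_subgroup: "subgroup (Zset n) (TW n)"
proof (rule subgroup.intro)
  show "Zset n \<subseteq> carrier (TW n)" by (auto simp: Zset_def carrier_TW)
next
  fix x y assume "x \<in> Zset n" "y \<in> Zset n"
  then obtain u v where "u \<in> tw_letters n" "v \<in> tw_letters n" "x = cls n u" "y = cls n v"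
    "foldl tog {} u = {}" "foldl tog {} v = {}" by (auto simp: Zset_def)
  then show "x \<otimes>\<^bsub>TW n\<^esub> y \<in> Zset n" unfolding Zset_def
    by (intro CollectI bexI[of _ "u @ v"]) (auto simp: mult_TW foldl_tog_app)
next
  show "\<one>\<^bsub>TW n\<^esub> \<in> Zset n" by (auto simp: Zset_def one_TW intro!: bexI[of _ "[]"])
next
  fix x assume "x \<in> Zset n"
  then obtain u where "u \<in> tw_letters n" "x = cls n u" "foldl tog {} u = {}" by (auto simp: Zset_def)
  then show "inv\<^bsub>TW n\<^esub> x \<in> Zset n" unfolding Zset_def
    by (intro CollectI bexI[of _ "rev u"]) (auto simp: inv_TW foldl_tog_rev)
qed

lemma derived_Zset: "derived (TW n) (carrier (TW n)) \<subseteq> Zset n"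
  unfolding derived_def
proof (rule group.generate_subgroup_incl[OF group_TW _ Zset_subgroup])
  show "derived_set (TW n) (carrier (TW n)) \<subseteq> Zset n"
  proof
    fix x assume "x \<in> derived_set (TW n) (carrier (TW n))"
    then obtain a b where ab: "a \<in> tw_letters n" "b \<in> tw_letters n"
      "x = cls n a \<otimes>\<^bsub>TW n\<^esub> cls n b \<otimes>\<^bsub>TW n\<^esub> inv\<^bsub>TW n\<^esub> (cls n a) \<otimes>\<^bsub>TW n\<^esub> inv\<^bsub>TW n\<^esub> (cls n b)"
      by (auto simp: carrier_TW)
    then have "x = cls n (a @ b @ rev a @ rev b)" by (simp add: inv_TW mult_TW)
    moreover have "foldl tog {} (a @ b @ rev a @ rev b) = {}"
      by (simp only: foldl_tog_app foldl_tog_rev) (auto simp: sd_def)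
    ultimately show "x \<in> Zset n" using ab unfolding Zset_def by auto
  qed
qed

definition hmap :: "('h, 'c) monoid_scheme \<Rightarrow> (nat set \<times> nat \<Rightarrow> 'h) \<Rightarrow> nat list set \<Rightarrow> 'h" where
  "hmap H f U = fst (twact H f (\<one>\<^bsub>H\<^esub>, {}) (SOME w. w \<in> U))"

lemma twact_up: "sorted_wrt (<) xs \<Longrightarrow> (\<forall>x\<in>set xs. x \<notin> s \<and> x + 1 \<notin> s) \<Longrightarrow> g \<otimes>\<^bsub>H\<^esub> \<one>\<^bsub>H\<^esub> = g \<Longrightarrow>
   twact H f (g, s) xs = (g, s \<union> set xs)"
proof (induction xs arbitrary: s)
  case (Cons x xs)
  have "gam H f s x = \<one>\<^bsub>H\<^esub>" using Cons by (simp add: gam_def)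
  moreover have "tog s x = insert x s" using Cons by (simp add: tog_def)
  moreover have "twact H f (g, insert x s) xs = (g, insert x s \<union> set xs)"
    using Cons by (intro Cons.IH) auto
  ultimately show ?case using Cons by simp
qed simp

lemma twact_down: "sorted_wrt (<) xs \<Longrightarrow> (\<forall>x\<in>set xs. x \<notin> s \<and> x + 1 \<notin> s) \<Longrightarrow> g \<otimes>\<^bsub>H\<^esub> \<one>\<^bsub>H\<^esub> = g \<Longrightarrow>
   twact H f (g, s \<union> set xs) (rev xs) = (g, s)"
proof (induction xs rule: rev_induct)
  case (snoc x xs)
  have sx: "sorted_wrt (<) xs" "\<forall>y\<in>set xs. y < x" using snoc.prems by (auto simp: sorted_wrt_append)
  have "gam H f (s \<union> set (xs @ [x])) x = \<one>\<^bsub>H\<^esub>" using snoc sx by (auto simp: gam_def)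
  moreover have "tog (s \<union> set (xs @ [x])) x = s \<union> set xs" using snoc sx by (auto simp: tog_def)
  ultimately show ?case using snoc sx by simp
qed simp

context twrel begin

lemma hmap_cls: "u \<in> tw_letters n \<Longrightarrow> hmap H f (cls n u) = fst (twact H f (\<one>, {}) u)"
proof -
  assume u: "u \<in> tw_letters n"
  have "(SOME w. w \<in> cls n u) \<in> cls n u" using cls_mem[OF u] by (rule someI)
  then have "tw_eq n (SOME w. w \<in> cls n u) u" by (simp add: tw_class_def)
  then show ?thesis unfolding hmap_def by (subst twact_tw_eq) auto
qed

lemma hmap_hom: "hmap H f \<in> hom ((TW n)\<lparr>carrier := derived (TW n) (carrier (TW n))\<rparr>) H"
proof -
  have Z: "\<And>U. U \<in> derived (TW n) (carrier (TW n)) \<Longrightarrow> \<exists>u \<in> tw_letters n. U = cls n u \<and> foldl tog {} u = {}"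
    using derived_Zset unfolding Zset_def by blast
  show ?thesis unfolding hom_def
  proof (intro CollectI conjI ballI)
    show "hmap H f \<in> carrier (TW n\<lparr>carrier := derived (TW n) (carrier (TW n))\<rparr>) \<rightarrow> carrier H"
    proof
      fix U assume "U \<in> carrier (TW n\<lparr>carrier := derived (TW n) (carrier (TW n))\<rparr>)"
      then obtain u where "u \<in> tw_letters n" "U = cls n u" using Z by auto
      then show "hmap H f U \<in> carrier H" by (simp add: hmap_cls twact_closed)
    qed
  next
    fix U V assume "U \<in> carrier (TW n\<lparr>carrier := derived (TW n) (carrier (TW n))\<rparr>)"
      "V \<in> carrier (TW n\<lparr>carrier := derived (TW n) (carrier (TW n))\<rparr>)"
    then obtain u v where uv: "u \<in> tw_letters n" "U = cls n u" "foldl tog {} u = {}"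
      "v \<in> tw_letters n" "V = cls n v" using Z[of U] Z[of V] by auto
    have "snd (twact H f (\<one>, {}) u) = {}" using snd_twact[of H f "(\<one>, {})" u] uv by simp
    then obtain g where g: "twact H f (\<one>, {}) u = (g, {})"
      by (metis prod.collapse)
    have gc: "g \<in> carrier H" using twact_closed[of \<one> "{}" u] uv g by simp
    have "hmap H f (U \<otimes>\<^bsub>TW n\<lparr>carrier := derived (TW n) (carrier (TW n))\<rparr>\<^esub> V) = hmap H f (cls n (u @ v))"
      using uv by (simp add: mult_TW)
    also have "\<dots> = fst (twact H f (g \<otimes> \<one>, {}) v)" using uv g gc by (simp add: hmap_cls twact_append)
    also have "\<dots> = g \<otimes> fst (twact H f (\<one>, {}) v)" using twact_mult[of g \<one> "{}" v] gc uv by simp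
    also have "\<dots> = hmap H f U \<otimes> hmap H f V" using uv g by (simp add: hmap_cls)
    finally show "hmap H f (U \<otimes>\<^bsub>TW n\<lparr>carrier := derived (TW n) (carrier (TW n))\<rparr>\<^esub> V) = hmap H f U \<otimes> hmap H f V" .
  qed
qed

lemma hmap_beta: assumes "(S, j) \<in> beta_index n" shows "hmap H f (beta n S j) = f (S, j)"
proof -
  have S: "S \<subseteq> {1..<j}" "j \<in> {1..n-2}" using assms by (auto simp: beta_index_def)
  have fin: "finite S" using S finite_subset by blast
  define xs where "xs = sorted_list_of_set S"
  have xs: "sorted_wrt (<) xs" "set xs = S" using fin by (auto simp: xs_def)
  have fc: "f (S, j) \<in> carrier H" using S by (intro f_closed)
  have "set xs \<subseteq> {1..<n}" using S xs by (auto simp: subset_iff)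
  then have lt: "xs @ [j + 1, j, j + 1, j] @ rev xs \<in> tw_letters n" using S by (auto simp: tw_letters_def)
  have "twact H f (\<one>, {}) xs = (\<one>, S)" using twact_up[OF xs(1), where s="{}" and g="\<one>" and H=H and f=f] xs by simp
  moreover have "twact H f (\<one>, S) [j + 1, j, j + 1, j] = (f (S, j), S)"
  proof -
    have a: "Suc (Suc j) \<notin> S" "Suc j \<notin> S" "j \<notin> S" "\<forall>x\<in>S. x < j" using S by auto
    have b: "{x \<in> insert (Suc j) S. x < j} = S" using a(4) by auto
    have e1: "gam H f S (Suc j) = \<one>" "tog S (Suc j) = insert (Suc j) S" using a(1,2) by (simp_all add: gam_def tog_def)
    have e2: "gam H f (insert (Suc j) S) j = f (S, j)" "tog (insert (Suc j) S) j = insert j (insert (Suc j) S)"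
      using a(3) b by (simp_all add: gam_def tog_def)
    have e3: "gam H f (insert j (insert (Suc j) S)) (Suc j) = \<one>"
      "tog (insert j (insert (Suc j) S)) (Suc j) = insert j S"
      using a(1,2,3) by (auto simp: gam_def tog_def)
    have e4: "gam H f (insert j S) j = \<one>" "tog (insert j S) j = S"
      using a(2,3) by (simp_all add: gam_def tog_def)
    show ?thesis using fc by (simp add: e1 e2 e3 e4)
  qed
  moreover have "twact H f (f (S, j), {} \<union> S) (rev xs) = (f (S, j), {})"
    using twact_down[OF xs(1), where s="{}" and g="f (S, j)" and H=H and f=f] xs fc by simp
  ultimately show ?thesis unfolding beta_def using lt
    by (simp add: hmap_cls twact_append xs_def[symmetric])
qed

end




abbreviation sl where "sl \<equiv> sorted_list_of_set"

lemma sl_split: fixes S :: "nat set" assumes "finite S" shows "sl S = sl {x \<in> S. x < i} @ sl {x \<in> S. i \<le> x}"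
proof (rule sorted_distinct_set_unique)
  show "sorted (sl S)" "distinct (sl S)" by auto
  show "sorted (sl {x \<in> S. x < i} @ sl {x \<in> S. i \<le> x})" using \<open>finite S\<close>
    by (auto simp: sorted_append)
  show "distinct (sl {x \<in> S. x < i} @ sl {x \<in> S. i \<le> x})" using \<open>finite S\<close> by (simp add: disjoint_iff)
  show "set (sl S) = set (sl {x \<in> S. x < i} @ sl {x \<in> S. i \<le> x})" using \<open>finite S\<close> by auto
qed

lemma sl_split2: "finite (S :: nat set) \<Longrightarrow> i \<notin> S \<Longrightarrow> sl S = sl {x \<in> S. x < i} @ sl {x \<in> S. i < x}"
proof -
  assume a: "finite S" "i \<notin> S"
  have "{x \<in> S. i \<le> x} = {x \<in> S. i < x}" using a by (auto simp: le_less)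
  then show ?thesis using sl_split[OF a(1), of i] by simp
qed

lemma sl_pick: "finite (S :: nat set) \<Longrightarrow> i \<in> S \<Longrightarrow> sl S = sl {x \<in> S. x < i} @ i # sl {x \<in> S. i < x}"
proof -
  assume a: "finite S" "i \<in> S"
  have "sl {x \<in> S. i \<le> x} = i # sl {x \<in> S. i < x}"
  proof (rule sorted_distinct_set_unique)
    show "sorted (sl {x \<in> S. i \<le> x})" "distinct (sl {x \<in> S. i \<le> x})" by auto
    show "sorted (i # sl {x \<in> S. i < x})" "distinct (i # sl {x \<in> S. i < x})" using a by auto
    show "set (sl {x \<in> S. i \<le> x}) = set (i # sl {x \<in> S. i < x})" using a by (auto simp: le_less)
  qed
  then show ?thesis using sl_split[OF a(1), of i] by simp
qed

lemma sl_letters: "S \<subseteq> {1..<n} \<Longrightarrow> sl S \<in> tw_letters n"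
proof -
  assume a: "S \<subseteq> {1..<n}"
  then have "finite S" using finite_subset by blast
  then show ?thesis using a by (simp add: tw_letters_def)
qed

lemma ctx: "tw_eq n u v \<Longrightarrow> xs \<in> tw_letters n \<Longrightarrow> ys \<in> tw_letters n \<Longrightarrow> tw_eq n (xs @ u @ ys) (xs @ v @ ys)"
  by (rule tw_eq_ctx)

lemma far_letters: "(\<forall>x\<in>set w. i + 1 < x) \<Longrightarrow> (\<forall>x\<in>set w. i + 1 < x \<or> x + 1 < i)"
  by auto




lemma cancel_mid: "P \<in> tw_letters n \<Longrightarrow> xs \<in> tw_letters n \<Longrightarrow> ys \<in> tw_letters n \<Longrightarrow>
  tw_eq n (xs @ rev P @ P @ ys) (xs @ ys)"
  using tw_eq_ctx[OF tw_cancel', of P n xs ys] by simp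

lemma sq_mid: "i \<in> {1..<n} \<Longrightarrow> xs \<in> tw_letters n \<Longrightarrow> ys \<in> tw_letters n \<Longrightarrow>
  tw_eq n (xs @ i # i # ys) (xs @ ys)"
  using tw_eq.tw_square[of xs n ys i] by simp

lemma comm_mid: "i \<in> {1..<n} \<Longrightarrow> w \<in> tw_letters n \<Longrightarrow> (\<forall>x\<in>set w. i + 1 < x \<or> x + 1 < i) \<Longrightarrow>
  xs \<in> tw_letters n \<Longrightarrow> ys \<in> tw_letters n \<Longrightarrow>
  tw_eq n (xs @ i # w @ ys) (xs @ w @ i # ys)"
  using tw_eq_ctx[OF tw_eq.tw_sym[OF tw_comm_word], of i n w xs ys] by simp

lemma beta_cls: "beta n S j = cls n (sl S @ Suc j # j # Suc j # j # rev (sl S))"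
  by (simp add: beta_def)

definition bf :: "nat \<Rightarrow> nat set \<times> nat \<Rightarrow> nat list set" where
  "bf n = (\<lambda>(S, j). beta n S j)"

lemma beta_derived:
  assumes "(S, j) \<in> beta_index n"
  shows "beta n S j \<in> derived_set (TW n) (carrier (TW n))"
proof -
  have S: "S \<subseteq> {1..<j}" "1 \<le> j" "j \<le> n - 2" using assms by (auto simp: beta_index_def)
  define P where "P = sl S"
  have P: "P \<in> tw_letters n" unfolding P_def using S by (intro sl_letters) (auto simp: subset_iff)
  have jn: "j \<in> {1..<n}" "Suc j \<in> {1..<n}" using S by auto
  define a where "a = cls n (P @ [Suc j] @ rev P)"
  define b where "b = cls n (P @ [j] @ rev P)"
  have ab: "a \<in> carrier (TW n)" "b \<in> carrier (TW n)" unfolding a_def b_def using P jn by (auto intro!: cls_carrier)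
  have "a \<otimes>\<^bsub>TW n\<^esub> b \<otimes>\<^bsub>TW n\<^esub> inv\<^bsub>TW n\<^esub> a \<otimes>\<^bsub>TW n\<^esub> inv\<^bsub>TW n\<^esub> b
      = cls n (P @ Suc j # rev P @ P @ j # rev P @ P @ Suc j # rev P @ P @ j # rev P)"
    unfolding a_def b_def using P jn by (simp add: inv_TW mult_TW)
  also have "\<dots> = cls n (P @ Suc j # j # Suc j # j # rev P)"
  proof -
    have "tw_eq n (P @ Suc j # rev P @ P @ j # rev P @ P @ Suc j # rev P @ P @ j # rev P)
                  (P @ Suc j # j # rev P @ P @ Suc j # rev P @ P @ j # rev P)"
      using cancel_mid[OF P, of "P @ [Suc j]" "j # rev P @ P @ Suc j # rev P @ P @ j # rev P"] P jn by simp
    also have "tw_eq n \<dots> (P @ Suc j # j # Suc j # rev P @ P @ j # rev P)"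
      using cancel_mid[OF P, of "P @ [Suc j, j]" "Suc j # rev P @ P @ j # rev P"] P jn by simp
    also have "tw_eq n \<dots> (P @ Suc j # j # Suc j # j # rev P)"
      using cancel_mid[OF P, of "P @ [Suc j, j, Suc j]" "j # rev P"] P jn by simp
    finally show ?thesis using P jn by (simp add: cls_eq)
  qed
  also have "\<dots> = beta n S j" by (simp add: beta_cls P_def)
  finally show ?thesis using ab by blast
qed

lemma sl_facts:
  fixes s :: "nat set"
  assumes "finite s"
  shows "i \<notin> s \<Longrightarrow> sl s = sl {x \<in> s. x < i} @ sl {x \<in> s. i < x}"
    and "i \<in> s \<Longrightarrow> sl s = sl {x \<in> s. x < i} @ i # sl {x \<in> s. i < x}"
    and "Suc i \<in> s \<Longrightarrow> sl {x \<in> s. i < x} = Suc i # sl {x \<in> s. Suc i < x}"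
    and "sl (insert i s) = sl {x \<in> s. x < i} @ i # sl {x \<in> s. i < x}"
    and "sl (s - {i}) = sl {x \<in> s. x < i} @ sl {x \<in> s. i < x}"
proof -
  show "i \<notin> s \<Longrightarrow> sl s = sl {x \<in> s. x < i} @ sl {x \<in> s. i < x}" using sl_split2[OF assms] by simp
  show "i \<in> s \<Longrightarrow> sl s = sl {x \<in> s. x < i} @ i # sl {x \<in> s. i < x}" using sl_pick[OF assms] by simp
  show "Suc i \<in> s \<Longrightarrow> sl {x \<in> s. i < x} = Suc i # sl {x \<in> s. Suc i < x}"
  proof -
    assume a: "Suc i \<in> s"
    have f: "finite {x \<in> s. i < x}" using assms by simp
    have "sl {x \<in> s. i < x} = sl {x \<in> {x \<in> s. i < x}. x < Suc i} @ Suc i # sl {x \<in> {x \<in> s. i < x}. Suc i < x}"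
      using sl_pick[OF f, of "Suc i"] a by simp
    moreover have "{x \<in> {x \<in> s. i < x}. x < Suc i} = {}" by auto
    moreover have "{x \<in> {x \<in> s. i < x}. Suc i < x} = {x \<in> s. Suc i < x}" by auto
    ultimately show ?thesis by simp
  qed
  have f: "finite (insert i s)" using assms by simp
  have "sl (insert i s) = sl {x \<in> insert i s. x < i} @ i # sl {x \<in> insert i s. i < x}"
    using sl_pick[OF f, of i] by simp
  moreover have "{x \<in> insert i s. x < i} = {x \<in> s. x < i}" "{x \<in> insert i s. i < x} = {x \<in> s. i < x}" by auto
  ultimately show "sl (insert i s) = sl {x \<in> s. x < i} @ i # sl {x \<in> s. i < x}" by simp
  have f: "finite (s - {i})" using assms by simp
  have "sl (s - {i}) = sl {x \<in> s - {i}. x < i} @ sl {x \<in> s - {i}. i < x}"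
    using sl_split2[OF f, of i] by simp
  moreover have "{x \<in> s - {i}. x < i} = {x \<in> s. x < i}" "{x \<in> s - {i}. i < x} = {x \<in> s. i < x}" by auto
  ultimately show "sl (s - {i}) = sl {x \<in> s. x < i} @ sl {x \<in> s. i < x}" by simp
qed




lemma TW_rel1:
  assumes t: "t \<in> {1..n-2}" and j: "1 \<le> j" "j + 2 \<le> t" and S: "S \<subseteq> {1..<t}" "j \<in> S" "j + 1 \<notin> S"
  shows "beta n S t = beta n (S - {j}) t"
proof -
  have fin: "finite S" using S finite_subset by blast
  define A where "A = sl {x \<in> S. x < j}"
  define C where "C = sl {x \<in> S. j < x}"
  have sS: "sl S = A @ j # C" using sl_facts(2)[OF fin, of j] S unfolding A_def C_def by simp
  have sS': "sl (S - {j}) = A @ C" using sl_facts(5)[OF fin, of j] unfolding A_def C_def by simp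
  define M where "M = C @ Suc t # t # Suc t # t # rev C"
  have Sn: "S \<subseteq> {1..<n}" using S t by (auto simp: subset_iff)
  have AL: "A \<in> tw_letters n" unfolding A_def using Sn by (intro sl_letters) (auto simp: subset_iff)
  have CL: "C \<in> tw_letters n" unfolding C_def using Sn by (intro sl_letters) (auto simp: subset_iff)
  have MW: "M \<in> tw_letters n" unfolding M_def using CL t by auto
  have jn: "j \<in> {1..<n}" using j t by auto
  have far: "\<forall>x\<in>set M. j + 1 < x \<or> x + 1 < j"
  proof -
    have "\<forall>x\<in>set C. j + 1 < x" unfolding C_def using fin S(3) by (auto simp: le_less Suc_le_eq) (metis Suc_lessI)
    then show ?thesis unfolding M_def using j by auto
  qed
  have e1: "beta n S t = cls n (A @ j # M @ j # rev A)" by (simp add: beta_cls sS M_def)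
  have e2: "beta n (S - {j}) t = cls n (A @ M @ rev A)" by (simp add: beta_cls sS' M_def)
  have "tw_eq n (A @ j # M @ j # rev A) (A @ M @ j # j # rev A)"
    using comm_mid[OF jn MW far AL, of "j # rev A"] AL jn by simp
  also have "tw_eq n \<dots> (A @ M @ rev A)"
    using sq_mid[OF jn, of "A @ M" "rev A"] AL MW by simp
  finally show ?thesis unfolding e1 e2 using AL MW jn by (simp add: cls_eq)
qed

lemma TW_rel2:
  assumes t: "t \<in> {1..n-2}" and j: "1 \<le> j" "j + 2 \<le> t" and S: "S \<subseteq> {1..<t}" "j \<in> S" "j + 1 \<in> S"
  shows "beta n S t = inv\<^bsub>TW n\<^esub> (beta n {i \<in> S. i < j} j) \<otimes>\<^bsub>TW n\<^esub> beta n (S - {j}) t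
     \<otimes>\<^bsub>TW n\<^esub> beta n {i \<in> S. i < j} j"
proof -
  have fin: "finite S" using S finite_subset by blast
  define A where "A = sl {x \<in> S. x < j}"
  define B where "B = sl {x \<in> S. Suc j < x}"
  have sS: "sl S = A @ j # Suc j # B" using sl_facts(2)[OF fin, of j] sl_facts(3)[OF fin, of j] S
    unfolding A_def B_def by simp
  have sS': "sl (S - {j}) = A @ Suc j # B" using sl_facts(5)[OF fin, of j] sl_facts(3)[OF fin, of j] S
    unfolding A_def B_def by simp
  define M where "M = B @ Suc t # t # Suc t # t # rev B"
  have Sn: "S \<subseteq> {1..<n}" using S t by (auto simp: subset_iff)
  have AL: "A \<in> tw_letters n" unfolding A_def using Sn by (intro sl_letters) (auto simp: subset_iff)
  have BL: "B \<in> tw_letters n" unfolding B_def using Sn by (intro sl_letters) (auto simp: subset_iff)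
  have MW: "M \<in> tw_letters n" unfolding M_def using BL t by auto
  have jn: "j \<in> {1..<n}" "Suc j \<in> {1..<n}" using j t by auto
  have far: "\<forall>x\<in>set M. j + 1 < x \<or> x + 1 < j"
  proof -
    have "\<forall>x\<in>set B. j + 1 < x" unfolding B_def using fin by auto
    then show ?thesis unfolding M_def using j by auto
  qed
  have e1: "beta n S t = cls n (A @ j # Suc j # M @ Suc j # j # rev A)" by (simp add: beta_cls sS M_def)
  have e2: "beta n (S - {j}) t = cls n (A @ Suc j # M @ Suc j # rev A)" by (simp add: beta_cls sS' M_def)
  have e3: "beta n {i \<in> S. i < j} j = cls n (A @ Suc j # j # Suc j # j # rev A)" by (simp add: beta_cls A_def)
  have rhs: "inv\<^bsub>TW n\<^esub> (beta n {i \<in> S. i < j} j) \<otimes>\<^bsub>TW n\<^esub> beta n (S - {j}) t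
     \<otimes>\<^bsub>TW n\<^esub> beta n {i \<in> S. i < j} j =
     cls n (A @ j # Suc j # j # Suc j # rev A @ A @ Suc j # M @ Suc j # rev A @ A @ Suc j # j # Suc j # j # rev A)"
    unfolding e2 e3 using AL MW jn by (simp add: inv_TW mult_TW)
  have "tw_eq n (A @ j # Suc j # j # Suc j # rev A @ A @ Suc j # M @ Suc j # rev A @ A @ Suc j # j # Suc j # j # rev A)
     (A @ j # Suc j # j # Suc j # Suc j # M @ Suc j # rev A @ A @ Suc j # j # Suc j # j # rev A)"
    using cancel_mid[OF AL, of "A @ [j, Suc j, j, Suc j]" "Suc j # M @ Suc j # rev A @ A @ Suc j # j # Suc j # j # rev A"] AL MW jn by simp
  also have "tw_eq n \<dots> (A @ j # Suc j # j # Suc j # Suc j # M @ Suc j # Suc j # j # Suc j # j # rev A)"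
    using cancel_mid[OF AL, of "A @ [j, Suc j, j, Suc j, Suc j] @ M @ [Suc j]" "Suc j # j # Suc j # j # rev A"] AL MW jn by simp
  also have "tw_eq n \<dots> (A @ j # Suc j # j # M @ Suc j # Suc j # j # Suc j # j # rev A)"
    using sq_mid[OF jn(2), of "A @ [j, Suc j, j]" "M @ Suc j # Suc j # j # Suc j # j # rev A"] AL MW jn by simp
  also have "tw_eq n \<dots> (A @ j # Suc j # j # M @ j # Suc j # j # rev A)"
    using sq_mid[OF jn(2), of "A @ [j, Suc j, j] @ M" "j # Suc j # j # rev A"] AL MW jn by simp
  also have "tw_eq n \<dots> (A @ j # Suc j # M @ j # j # Suc j # j # rev A)"
    using comm_mid[OF jn(1) MW far, of "A @ [j, Suc j]" "j # Suc j # j # rev A"] AL MW jn by simp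
  also have "tw_eq n \<dots> (A @ j # Suc j # M @ Suc j # j # rev A)"
    using sq_mid[OF jn(1), of "A @ [j, Suc j] @ M" "Suc j # j # rev A"] AL MW jn by simp
  finally have "tw_eq n (A @ j # Suc j # j # Suc j # rev A @ A @ Suc j # M @ Suc j # rev A @ A @ Suc j # j # Suc j # j # rev A)
      (A @ j # Suc j # M @ Suc j # j # rev A)" .
  then show ?thesis unfolding rhs e1 using AL MW jn by (simp add: cls_eq tw_eq.tw_sym)
qed

lemma TW_relations: "beta_relations n (TW n) (bf n)"
  unfolding beta_relations_def bf_def
  using TW_rel1 TW_rel2 by simp




lemma bf_closed: "bf n ` beta_index n \<subseteq> carrier (TW n)"
proof
  fix x assume "x \<in> bf n ` beta_index n"
  then obtain S j where Sj: "(S, j) \<in> beta_index n" "x = beta n S j" by (auto simp: bf_def)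
  then have "S \<subseteq> {1..<n}" "j \<in> {1..<n}" "Suc j \<in> {1..<n}" by (auto simp: beta_index_def subset_iff)
  then have "sl S \<in> tw_letters n" by (intro sl_letters)
  then show "x \<in> carrier (TW n)" using Sj \<open>j \<in> _\<close> \<open>Suc j \<in> _\<close> by (simp add: beta_cls cls_carrier)
qed


lemma core:
  assumes s: "s \<subseteq> {1..<n}" and i: "i \<in> {1..<n}"
  shows "gam (TW n) (bf n) s i \<otimes>\<^bsub>TW n\<^esub> cls n (sl (tog s i)) = cls n (sl s) \<otimes>\<^bsub>TW n\<^esub> cls n [i]"
proof -
  have fin: "finite s" using s finite_subset by blast
  define A where "A = sl {x \<in> s. x < i}"
  have AL: "A \<in> tw_letters n" unfolding A_def using s by (intro sl_letters) (auto simp: subset_iff)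
  have sL: "sl s \<in> tw_letters n" using s by (intro sl_letters)
  have iL: "[i] \<in> tw_letters n" using i by simp
  show ?thesis
  proof (cases "Suc i \<in> s")
    case False
    define C where "C = sl {x \<in> s. i < x}"
    have CL: "C \<in> tw_letters n" unfolding C_def using s by (intro sl_letters) (auto simp: subset_iff)
    have far: "\<forall>x\<in>set C. i + 1 < x \<or> x + 1 < i"
      unfolding C_def using fin False by (auto simp: le_less Suc_le_eq) (metis Suc_lessI)
    have g: "gam (TW n) (bf n) s i = cls n []" using False by (simp add: gam_def one_TW)
    show ?thesis
    proof (cases "i \<in> s")
      case True
      have t: "sl (tog s i) = A @ C" using True sl_facts(5)[OF fin, of i] by (simp add: tog_def A_def C_def)
      have ss: "sl s = A @ i # C" using True sl_facts(2)[OF fin, of i] by (simp add: A_def C_def)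
      have "tw_eq n (A @ i # C @ [i]) (A @ C @ i # i # [])"
        using comm_mid[OF i CL far AL, of "[i]"] i by simp
      also have "tw_eq n \<dots> (A @ C)" using sq_mid[OF i, of "A @ C" "[]"] AL CL by simp
      finally show ?thesis unfolding g t using AL CL i by (simp add: mult_TW ss cls_eq tw_eq.tw_sym)
    next
      case False': False
      have t: "sl (tog s i) = A @ i # C" using False' sl_facts(4)[OF fin, of i] by (simp add: tog_def A_def C_def)
      have ss: "sl s = A @ C" using False' sl_facts(1)[OF fin, of i] by (simp add: A_def C_def)
      have "tw_eq n (A @ i # C @ []) (A @ C @ i # [])"
        using comm_mid[OF i CL far AL, of "[]"] i by simp
      then show ?thesis unfolding g t using AL CL i by (simp add: mult_TW ss cls_eq)
    qed
  next
    case True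
    define B where "B = sl {x \<in> s. Suc i < x}"
    have BL: "B \<in> tw_letters n" unfolding B_def using s by (intro sl_letters) (auto simp: subset_iff)
    have far: "\<forall>x\<in>set B. i + 1 < x \<or> x + 1 < i" unfolding B_def using fin by auto
    have i1: "Suc i \<in> {1..<n}" using True s by auto
    have bA: "beta n {x \<in> s. x < i} i = cls n (A @ Suc i # i # Suc i # i # rev A)" by (simp add: beta_cls A_def)
    show ?thesis
    proof (cases "i \<in> s")
      case True': True
      have g: "gam (TW n) (bf n) s i = cls n (A @ i # Suc i # i # Suc i # rev A)"
        using True True' AL i i1 by (simp add: gam_def bf_def bA inv_TW)
      have t: "sl (tog s i) = A @ Suc i # B" using True True' sl_facts(5)[OF fin, of i] sl_facts(3)[OF fin, of i]
        by (simp add: tog_def A_def B_def)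
      have ss: "sl s = A @ i # Suc i # B" using True True' sl_facts(2)[OF fin, of i] sl_facts(3)[OF fin, of i]
        by (simp add: A_def B_def)
      have "tw_eq n (A @ i # Suc i # i # Suc i # rev A @ A @ Suc i # B) (A @ i # Suc i # i # Suc i # Suc i # B)"
        using cancel_mid[OF AL, of "A @ [i, Suc i, i, Suc i]" "Suc i # B"] AL BL i i1 by simp
      also have "tw_eq n \<dots> (A @ i # Suc i # i # B)"
        using sq_mid[OF i1, of "A @ [i, Suc i, i]" B] AL BL i i1 by simp
      also have "tw_eq n \<dots> (A @ i # Suc i # B @ [i])"
        using comm_mid[OF i BL far, of "A @ [i, Suc i]" "[]"] AL BL i i1 by (simp add: tw_eq.tw_sym)
      finally show ?thesis unfolding g t ss using AL BL i i1 by (simp add: mult_TW cls_eq)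
    next
      case False
      have g: "gam (TW n) (bf n) s i = cls n (A @ Suc i # i # Suc i # i # rev A)"
        using True False AL i i1 by (simp add: gam_def bf_def bA)
      have t: "sl (tog s i) = A @ i # Suc i # B" using True False sl_facts(4)[OF fin, of i] sl_facts(3)[OF fin, of i]
        by (simp add: tog_def A_def B_def)
      have ss: "sl s = A @ Suc i # B" using True False sl_facts(1)[OF fin, of i] sl_facts(3)[OF fin, of i]
        by (simp add: A_def B_def)
      have "tw_eq n (A @ Suc i # i # Suc i # i # rev A @ A @ i # Suc i # B) (A @ Suc i # i # Suc i # i # i # Suc i # B)"
        using cancel_mid[OF AL, of "A @ [Suc i, i, Suc i, i]" "i # Suc i # B"] AL BL i i1 by simp
      also have "tw_eq n \<dots> (A @ Suc i # i # Suc i # Suc i # B)"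
        using sq_mid[OF i, of "A @ [Suc i, i, Suc i]" "Suc i # B"] AL BL i i1 by simp
      also have "tw_eq n \<dots> (A @ Suc i # i # B)"
        using sq_mid[OF i1, of "A @ [Suc i, i]" B] AL BL i i1 by simp
      also have "tw_eq n \<dots> (A @ Suc i # B @ [i])"
        using comm_mid[OF i BL far, of "A @ [Suc i]" "[]"] AL BL i i1 by (simp add: tw_eq.tw_sym)
      finally show ?thesis unfolding g t ss using AL BL i i1 by (simp add: mult_TW cls_eq)
    qed
  qed
qed




lemma gam_in_G:
  assumes s: "s \<subseteq> {1..<n}" and i: "i \<in> {1..<n}"
  shows "gam (TW n) (bf n) s i \<in> generate (TW n) (bf n ` beta_index n)"
proof (cases "Suc i \<in> s")
  case True
  have idx: "({x \<in> s. x < i}, i) \<in> beta_index n" using True s i by (auto simp: beta_index_def subset_iff)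
  then have m: "bf n ({x \<in> s. x < i}, i) \<in> bf n ` beta_index n" by blast
  show ?thesis
  proof (cases "i \<in> s")
    case True': True
    then show ?thesis using True generate.inv[OF m] by (simp add: gam_def)
  next
    case False
    then show ?thesis using True generate.incl[OF m] by (simp add: gam_def)
  qed
next
  case False
  then show ?thesis using generate.one by (simp add: gam_def)
qed

lemma gen:
  assumes "w \<in> tw_letters n"
  shows "fst (twact (TW n) (bf n) (\<one>\<^bsub>TW n\<^esub>, {}) w) \<in> generate (TW n) (bf n ` beta_index n)
    \<and> fst (twact (TW n) (bf n) (\<one>\<^bsub>TW n\<^esub>, {}) w) \<otimes>\<^bsub>TW n\<^esub> cls n (sl (foldl tog {} w)) = cls n w"
  using assms
proof (induction w rule: rev_induct)
  case Nil
  have "\<one>\<^bsub>TW n\<^esub> \<in> carrier (TW n)" by (simp add: one_TW cls_carrier)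
  then show ?case using generate.one[of "TW n"] by (simp add: one_TW mult_TW)
next
  case (snoc x w)
  define g where "g = fst (twact (TW n) (bf n) (\<one>\<^bsub>TW n\<^esub>, {}) w)"
  define s where "s = foldl tog {} w"
  have wl: "w \<in> tw_letters n" and xl: "x \<in> {1..<n}" using snoc.prems by auto
  have p: "twact (TW n) (bf n) (\<one>\<^bsub>TW n\<^esub>, {}) w = (g, s)"
    using snd_twact[of "TW n" "bf n" "(\<one>\<^bsub>TW n\<^esub>, {})" w] unfolding g_def s_def by (metis prod.collapse snd_conv)
  have IH: "g \<in> generate (TW n) (bf n ` beta_index n)" "g \<otimes>\<^bsub>TW n\<^esub> cls n (sl s) = cls n w"
    using snoc.IH[OF wl] unfolding g_def s_def by auto
  have sr: "s \<subseteq> {1..<n}" unfolding s_def using wl by (intro foldl_tog_range) auto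
  have Gc: "generate (TW n) (bf n ` beta_index n) \<subseteq> carrier (TW n)"
    using group.generate_incl[OF group_TW bf_closed] .
  have gG: "gam (TW n) (bf n) s x \<in> generate (TW n) (bf n ` beta_index n)" using gam_in_G[OF sr xl] .
  have gc: "g \<in> carrier (TW n)" "gam (TW n) (bf n) s x \<in> carrier (TW n)" using IH gG Gc by auto
  have Rc: "cls n (sl s) \<in> carrier (TW n)" "cls n (sl (tog s x)) \<in> carrier (TW n)" "cls n [x] \<in> carrier (TW n)"
    using sr xl tog_range[OF sr xl] by (auto intro!: cls_carrier sl_letters)
  have "twact (TW n) (bf n) (\<one>\<^bsub>TW n\<^esub>, {}) (w @ [x]) = (g \<otimes>\<^bsub>TW n\<^esub> gam (TW n) (bf n) s x, tog s x)"
    using p by (simp add: twact_append)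
  moreover have "foldl tog {} (w @ [x]) = tog s x" by (simp add: s_def)
  moreover have "g \<otimes>\<^bsub>TW n\<^esub> gam (TW n) (bf n) s x \<in> generate (TW n) (bf n ` beta_index n)"
    using IH(1) gG by (rule generate.eng)
  moreover have "(g \<otimes>\<^bsub>TW n\<^esub> gam (TW n) (bf n) s x) \<otimes>\<^bsub>TW n\<^esub> cls n (sl (tog s x)) = cls n (w @ [x])"
  proof -
    have "(g \<otimes>\<^bsub>TW n\<^esub> gam (TW n) (bf n) s x) \<otimes>\<^bsub>TW n\<^esub> cls n (sl (tog s x))
        = g \<otimes>\<^bsub>TW n\<^esub> (gam (TW n) (bf n) s x \<otimes>\<^bsub>TW n\<^esub> cls n (sl (tog s x)))"
      using gc Rc by (simp add: group.is_monoid[OF group_TW] monoid.m_assoc)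
    also have "\<dots> = g \<otimes>\<^bsub>TW n\<^esub> (cls n (sl s) \<otimes>\<^bsub>TW n\<^esub> cls n [x])" using core[OF sr xl] by simp
    also have "\<dots> = (g \<otimes>\<^bsub>TW n\<^esub> cls n (sl s)) \<otimes>\<^bsub>TW n\<^esub> cls n [x]"
      using gc Rc by (simp add: group.is_monoid[OF group_TW] monoid.m_assoc)
    also have "\<dots> = cls n (w @ [x])" using IH(2) wl xl by (simp add: mult_TW)
    finally show ?thesis .
  qed
  ultimately show ?case by simp
qed

theorem lemma3p3:
  fixes n :: nat
  assumes "n \<ge> 3"
  defines "K \<equiv> derived (TW n) (carrier (TW n))"
  shows "(\<lambda>(S, j). beta n S j) ` beta_index n \<subseteq> K
    \<and> generate (TW n) ((\<lambda>(S, j). beta n S j) ` beta_index n) = K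
    \<and> beta_relations n (TW n) (\<lambda>(S, j). beta n S j)
    \<and> (\<forall>(H :: ('h, 'c) monoid_scheme) (f :: nat set \<times> nat \<Rightarrow> 'h).
          group H \<and> f ` beta_index n \<subseteq> carrier H \<and> beta_relations n H f \<longrightarrow>
          (\<exists>h \<in> hom ((TW n)\<lparr>carrier := K\<rparr>) H.
             \<forall>(S, j) \<in> beta_index n. h (beta n S j) = f (S, j)))"
proof -
  have bfe: "(\<lambda>(S, j). beta n S j) = bf n" by (simp add: bf_def)
  have grp: "group (TW n)" by (rule group_TW)
  have sub: "subgroup K (TW n)" unfolding K_def derived_def
    by (rule group.generate_is_subgroup[OF grp group.derived_set_in_carrier[OF grp]]) simp
  have c1: "bf n ` beta_index n \<subseteq> K"
  proof
    fix x assume "x \<in> bf n ` beta_index n"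
    then obtain S j where "(S, j) \<in> beta_index n" "x = beta n S j" by (auto simp: bf_def)
    then have "x \<in> derived_set (TW n) (carrier (TW n))" using beta_derived by simp
    then show "x \<in> K" unfolding K_def derived_def by (rule generate.incl)
  qed
  have c2: "generate (TW n) (bf n ` beta_index n) = K"
  proof
    show "generate (TW n) (bf n ` beta_index n) \<subseteq> K"
      by (rule group.generate_subgroup_incl[OF grp c1 sub])
  next
    show "K \<subseteq> generate (TW n) (bf n ` beta_index n)"
    proof
      fix U assume "U \<in> K"
      then have "U \<in> Zset n" using derived_Zset unfolding K_def by blast
      then obtain u where u: "u \<in> tw_letters n" "U = cls n u" "foldl tog {} u = {}" by (auto simp: Zset_def)
      define g where "g = fst (twact (TW n) (bf n) (\<one>\<^bsub>TW n\<^esub>, {}) u)"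
      have G: "g \<in> generate (TW n) (bf n ` beta_index n)" "g \<otimes>\<^bsub>TW n\<^esub> cls n [] = cls n u"
        using gen[OF u(1)] u(3) unfolding g_def by auto
      have "g \<in> carrier (TW n)" using G(1) group.generate_incl[OF group_TW bf_closed] by blast
      then have "g = cls n u" using G(2) by (simp flip: one_TW add: group.is_monoid[OF grp] monoid.r_one)
      then show "U \<in> generate (TW n) (bf n ` beta_index n)" using G(1) u(2) by simp
    qed
  qed
  have c4: "\<forall>(H :: ('h, 'c) monoid_scheme) (f :: nat set \<times> nat \<Rightarrow> 'h).
          group H \<and> f ` beta_index n \<subseteq> carrier H \<and> beta_relations n H f \<longrightarrow>
          (\<exists>h \<in> hom ((TW n)\<lparr>carrier := K\<rparr>) H.
             \<forall>(S, j) \<in> beta_index n. h (beta n S j) = f (S, j))"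
  proof (intro allI impI)
    fix H :: "('h, 'c) monoid_scheme" and f :: "nat set \<times> nat \<Rightarrow> 'h"
    assume a: "group H \<and> f ` beta_index n \<subseteq> carrier H \<and> beta_relations n H f"
    then interpret R: twrel H n f by (intro twrel.intro twrel_axioms.intro) auto
    show "\<exists>h \<in> hom ((TW n)\<lparr>carrier := K\<rparr>) H. \<forall>(S, j) \<in> beta_index n. h (beta n S j) = f (S, j)"
      using R.hmap_hom R.hmap_beta unfolding K_def by blast
  qed
  show ?thesis unfolding bfe using c1 c2 c4 TW_relations by blast
qed


end
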